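(* Let $b_1,\dots,b_k$ be nonnegative integers, $n_1,\dots,n_k$ integers, and $n$ a positive integer, and suppose $\sum_{i=1}^kn_ib_i^m=0$ for $m=1,3,5,\dots,2n-1$. Then for all sufficiently large primes $p$, $$\prod_{i=1}^k(b_ip)!^{n_i}\equiv\prod_{i=1}^kb_i!^{n_i}\pmod{p^{2n+1}}.$$
   Context: The congruence is between $p$-adic integers (units for large $p$), i.e. the difference lies in $p^{2n+1}\mathbb Z_p$. *)

theory Defs
  imports Complex_Main "HOL-Computational_Algebra.Primes"
begin

text \<open>Congruence modulo p^N in the p-adic integers, restricted to rationals:
  x - y lies in p^N Z_(p), i.e. x - y = p^N a / d with integers a, d and p not dividing d.\<close>
definition padic_cong :: "nat \<Rightarrow> nat \<Rightarrow> rat \<Rightarrow> rat \<Rightarrow> bool" where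
  "padic_cong p N x y \<longleftrightarrow>
     (\<exists>a d :: int. \<not> (int p dvd d) \<and> x - y = of_int (int p ^ N * a) / of_int d)"

end

theory Submission
  imports Defs "HOL-Number_Theory.Number_Theory" "HOL-Computational_Algebra.Polynomial_FPS"
begin


definition zp :: "nat \<Rightarrow> rat \<Rightarrow> bool" where
  "zp p x \<longleftrightarrow> (\<exists>a d :: int. \<not> int p dvd d \<and> x = of_int a / of_int d)"

definition pu :: "nat \<Rightarrow> rat \<Rightarrow> bool" where
  "pu p x \<longleftrightarrow> (\<exists>a d :: int. \<not> int p dvd a \<and> \<not> int p dvd d \<and> x = of_int a / of_int d)"

lemma ndvd_mult: "prime p \<Longrightarrow> \<not> int p dvd d \<Longrightarrow> \<not> int p dvd e \<Longrightarrow> \<not> int p dvd (d*e)"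
  by (simp add: prime_dvd_mult_iff)

lemma zp_int: "prime p \<Longrightarrow> zp p (of_int a)"
  unfolding zp_def by (rule exI[of _ a], rule exI[of _ 1]) (auto simp: prime_gt_1_nat)

lemma zp_nat: "prime p \<Longrightarrow> zp p (of_nat a)"
  using zp_int[of p "int a"] by simp

lemma zp_add: assumes "prime p" "zp p x" "zp p y" shows "zp p (x + y)"
proof -
  obtain a d b e where "\<not> int p dvd d" "x = of_int a / of_int d" "\<not> int p dvd e" "y = of_int b / of_int e"
    using assms unfolding zp_def by blast
  moreover have "d \<noteq> 0" "e \<noteq> 0" using calculation by auto
  ultimately show ?thesis unfolding zp_def using ndvd_mult[OF assms(1)]
    by (intro exI[of _ "a*e+b*d"] exI[of _ "d*e"]) (auto simp: field_simps)
qed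

lemma zp_mult: assumes "prime p" "zp p x" "zp p y" shows "zp p (x * y)"
proof -
  obtain a d b e where "\<not> int p dvd d" "x = of_int a / of_int d" "\<not> int p dvd e" "y = of_int b / of_int e"
    using assms unfolding zp_def by blast
  moreover have "d \<noteq> 0" "e \<noteq> 0" using calculation by auto
  ultimately show ?thesis unfolding zp_def using ndvd_mult[OF assms(1)]
    by (intro exI[of _ "a*b"] exI[of _ "d*e"]) (auto simp: field_simps)
qed

lemma zp_uminus: assumes "zp p x" shows "zp p (- x)"
proof -
  obtain a d where "\<not> int p dvd d" "x = of_int a / of_int d" using assms unfolding zp_def by blast
  then show ?thesis unfolding zp_def by (intro exI[of _ "-a"] exI[of _ d]) auto
qed

lemma zp_diff: "prime p \<Longrightarrow> zp p x \<Longrightarrow> zp p y \<Longrightarrow> zp p (x - y)"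
  using zp_add[of p x "-y"] zp_uminus[of p y] by simp

lemma zp_sum: "prime p \<Longrightarrow> (\<And>i. i \<in> A \<Longrightarrow> zp p (f i)) \<Longrightarrow> zp p (\<Sum>i\<in>A. f i)"
  by (induction A rule: infinite_finite_induct) (auto intro: zp_add zp_int[of p 0, simplified])

lemma zp_prod: "prime p \<Longrightarrow> (\<And>i. i \<in> A \<Longrightarrow> zp p (f i)) \<Longrightarrow> zp p (\<Prod>i\<in>A. f i)"
  by (induction A rule: infinite_finite_induct) (auto intro: zp_mult zp_int[of p 1, simplified])

lemma zp_power: "prime p \<Longrightarrow> zp p x \<Longrightarrow> zp p (x ^ m)"
  by (induction m) (auto intro: zp_mult zp_int[of p 1, simplified])

lemma zp_frac: "\<not> int p dvd d \<Longrightarrow> zp p (of_int a / of_int d)"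
  unfolding zp_def by blast

lemma pu_zp: "pu p x \<Longrightarrow> zp p x"
  unfolding pu_def zp_def by blast

lemma pu_inverse: "pu p x \<Longrightarrow> pu p (inverse x)"
  unfolding pu_def by (metis inverse_divide)

lemma pu_mult: assumes "prime p" "pu p x" "pu p y" shows "pu p (x * y)"
proof -
  obtain a d b e where "\<not> int p dvd d" "x = of_int a / of_int d" "\<not> int p dvd e" "y = of_int b / of_int e"
    "\<not> int p dvd a" "\<not> int p dvd b"
    using assms unfolding pu_def by blast
  moreover have "d \<noteq> 0" "e \<noteq> 0" using calculation by auto
  ultimately show ?thesis unfolding pu_def using ndvd_mult[OF assms(1)]
    by (intro exI[of _ "a*b"] exI[of _ "d*e"]) (auto simp: field_simps)
qed

lemma pu_one: "prime p \<Longrightarrow> pu p 1"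
  unfolding pu_def by (rule exI[of _ 1], rule exI[of _ 1]) (auto simp: prime_gt_1_nat)

lemma pu_prod: "prime p \<Longrightarrow> (\<And>i. i \<in> A \<Longrightarrow> pu p (f i)) \<Longrightarrow> pu p (\<Prod>i\<in>A. f i)"
  by (induction A rule: infinite_finite_induct) (auto intro: pu_mult pu_one)

lemma pu_power: "prime p \<Longrightarrow> pu p x \<Longrightarrow> pu p (x ^ m)"
  by (induction m) (auto intro: pu_mult pu_one)

lemma pu_powi: "prime p \<Longrightarrow> pu p x \<Longrightarrow> pu p (x powi m)"
  unfolding power_int_def by (auto intro: pu_power pu_inverse simp: power_inverse[symmetric])

lemma pu_nat: "prime p \<Longrightarrow> \<not> p dvd a \<Longrightarrow> pu p (of_nat a)"
  unfolding pu_def by (rule exI[of _ "int a"], rule exI[of _ 1]) (auto simp: prime_gt_1_nat)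

lemma pu_nonzero: "pu p x \<Longrightarrow> x \<noteq> 0"
  unfolding pu_def by auto

lemma pc_iff: "padic_cong p N x y \<longleftrightarrow> padic_cong p N (x - y) 0"
  unfolding padic_cong_def by simp

lemma pc_add: assumes "prime p" "padic_cong p N x 0" "padic_cong p N y 0" shows "padic_cong p N (x + y) 0"
proof -
  obtain a d b e where "\<not> int p dvd d" "x = of_int (int p ^ N * a) / of_int d" "\<not> int p dvd e" "y = of_int (int p ^ N * b) / of_int e"
    using assms unfolding padic_cong_def by auto
  moreover have "d \<noteq> 0" "e \<noteq> 0" using calculation by auto
  ultimately show ?thesis unfolding padic_cong_def using ndvd_mult[OF assms(1)]
    by (intro exI[of _ "a*e+b*d"] exI[of _ "d*e"]) (auto simp: field_simps)
qed

lemma pc_mult_zp: assumes "prime p" "padic_cong p N x 0" "zp p y" shows "padic_cong p N (x * y) 0"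
proof -
  obtain a d b e where "\<not> int p dvd d" "x = of_int (int p ^ N * a) / of_int d" "\<not> int p dvd e" "y = of_int b / of_int e"
    using assms unfolding padic_cong_def zp_def by auto
  moreover have "d \<noteq> 0" "e \<noteq> 0" using calculation by auto
  ultimately show ?thesis unfolding padic_cong_def using ndvd_mult[OF assms(1)]
    by (intro exI[of _ "a*b"] exI[of _ "d*e"]) (auto simp: field_simps)
qed

lemma pc_mult: assumes "prime p" "padic_cong p M x 0" "padic_cong p K y 0" shows "padic_cong p (M+K) (x * y) 0"
proof -
  obtain a d b e where "\<not> int p dvd d" "x = of_int (int p ^ M * a) / of_int d" "\<not> int p dvd e" "y = of_int (int p ^ K * b) / of_int e"
    using assms unfolding padic_cong_def by auto
  moreover have "d \<noteq> 0" "e \<noteq> 0" using calculation by auto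
  ultimately show ?thesis unfolding padic_cong_def using ndvd_mult[OF assms(1)]
    by (intro exI[of _ "a*b"] exI[of _ "d*e"]) (auto simp: field_simps power_add)
qed

lemma pc_zero: "prime p \<Longrightarrow> padic_cong p N 0 0"
  unfolding padic_cong_def by (rule exI[of _ 0], rule exI[of _ 1]) (auto simp: prime_gt_1_nat)

lemma pc_sum: "prime p \<Longrightarrow> (\<And>i. i \<in> A \<Longrightarrow> padic_cong p N (f i) 0) \<Longrightarrow> padic_cong p N (\<Sum>i\<in>A. f i) 0"
  by (induction A rule: infinite_finite_induct) (auto intro: pc_add pc_zero)

lemma pc_mono: assumes "N \<le> M" "padic_cong p M x 0" shows "padic_cong p N x 0"
proof -
  obtain a d where "\<not> int p dvd d" "x = of_int (int p ^ M * a) / of_int d"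
    using assms unfolding padic_cong_def by auto
  moreover have "int p ^ M * a = int p ^ N * (int p ^ (M - N) * a)"
    using assms(1) by (simp add: power_add[symmetric])
  ultimately show ?thesis unfolding padic_cong_def by (metis diff_zero)
qed

lemma pc_ppow: assumes "zp p y" shows "padic_cong p N (of_nat p ^ N * y) 0"
proof -
  obtain a d where "\<not> int p dvd d" "y = of_int a / of_int d" using assms unfolding zp_def by blast
  then show ?thesis unfolding padic_cong_def by (intro exI[of _ a] exI[of _ d]) auto
qed

lemma pc1_int: assumes "int p dvd m" "\<not> int p dvd d" shows "padic_cong p 1 (of_int m / of_int d) 0"
proof -
  obtain k where "m = int p * k" using assms by (auto elim: dvdE)
  then show ?thesis using assms(2) unfolding padic_cong_def by (intro exI[of _ k] exI[of _ d]) auto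
qed

lemma pc_zp: "padic_cong p N x 0 \<Longrightarrow> zp p x"
  unfolding padic_cong_def zp_def by (metis diff_zero)

lemma pc_uminus: "padic_cong p N x 0 \<Longrightarrow> padic_cong p N (-x) 0"
  unfolding padic_cong_def by (auto) (metis minus_divide_left mult_minus_right of_int_minus)


unbundle fps_syntax

lemma sum_single: "finite S \<Longrightarrow> j \<in> S \<Longrightarrow> (\<And>i. i \<in> S \<Longrightarrow> i \<noteq> j \<Longrightarrow> f i = 0) \<Longrightarrow> sum f S = f j"
  by (subst sum.remove[of S j]) (auto intro: sum.neutral)

lemma prod_nth0: "(\<Prod>i\<in>A. f i) $ 0 = (\<Prod>i\<in>A. (f i :: 'b::comm_ring_1 fps) $ 0)"
  by (induction A rule: infinite_finite_induct) auto

definition LD :: "rat fps \<Rightarrow> rat fps" where "LD f = fps_deriv f * inverse f"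

lemma LD_mult: assumes "f$0 \<noteq> 0" "g$0 \<noteq> 0" shows "LD (f*g) = LD f + LD g"
proof -
  have 1: "f * inverse f = 1" "g * inverse g = 1" using assms by (auto intro: inverse_mult_eq_1')
  have "(f * fps_deriv g + fps_deriv f * g) * (inverse f * inverse g)
     = fps_deriv g * inverse g * (f * inverse f) + fps_deriv f * inverse f * (g * inverse g)"
    by (simp add: algebra_simps)
  then show ?thesis unfolding LD_def by (simp add: fps_inverse_mult 1)
qed

lemma LD_one: "LD 1 = 0" unfolding LD_def by simp

lemma LD_power: assumes "f$0 \<noteq> 0" shows "LD (f^m) = fps_const (of_nat m) * LD f"
proof (induction m)
  case 0 then show ?case by (simp add: LD_one)
next
  case (Suc m)
  have "LD (f^Suc m) = LD f + LD (f^m)" using assms by (simp add: LD_mult fps_power_zeroth)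
  then show ?case using Suc by (simp add: algebra_simps fps_const_add[symmetric])
qed

lemma LD_prod: "finite A \<Longrightarrow> (\<And>i. i \<in> A \<Longrightarrow> f i $ 0 \<noteq> 0) \<Longrightarrow> LD (\<Prod>i\<in>A. f i) = (\<Sum>i\<in>A. LD (f i)) \<and> (\<Prod>i\<in>A. f i) $ 0 \<noteq> 0"
proof (induction A rule: finite_induct)
  case empty then show ?case by (simp add: LD_one)
next
  case (insert x F)
  then show ?case by (simp add: LD_mult)
qed

lemma LD_inverse: assumes "f$0 \<noteq> 0" shows "LD (inverse f) = - LD f"
proof -
  have 1: "f * inverse f = 1" using assms by (auto intro: inverse_mult_eq_1')
  have "- fps_deriv f * (inverse f)\<^sup>2 * f = - fps_deriv f * inverse f * (f * inverse f)"
    by (simp add: power2_eq_square algebra_simps)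
  then show ?thesis unfolding LD_def using assms by (simp add: fps_inverse_deriv 1)
qed

lemma lin_inverse: "inverse (1 + fps_const (a::rat) * fps_X) = Abs_fps (\<lambda>m. (-a)^m)"
proof (rule fps_inverse_unique, rule fps_ext)
  fix n
  show "((1 + fps_const a * fps_X) * Abs_fps (\<lambda>m. (-a)^m)) $ n = (1::rat fps) $ n"
    by (cases n) (simp_all add: algebra_simps)
qed

lemma LD_lin: "LD (1 + fps_const (a::rat) * fps_X) $ m = a * (-a)^m"
  unfolding LD_def lin_inverse by simp

lemma Q_step:
  fixes Q D :: "rat fps"
  assumes "fps_deriv Q = Q * D" "Q$0 = 1" "0 < k" "\<And>l. 0 < l \<Longrightarrow> l < k \<Longrightarrow> Q$l = 0"
  shows "of_nat k * Q$k = D$(k-1)"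
proof -
  have "fps_deriv Q $ (k-1) = (Q*D) $ (k-1)" using assms(1) by simp
  moreover have "fps_deriv Q $ (k-1) = of_nat k * Q$k" using assms(3) by simp
  moreover have "(Q*D) $ (k-1) = Q$0 * D$(k-1 - 0)" unfolding fps_mult_nth
    by (rule sum_single) (use assms(3,4) in auto)
  ultimately show ?thesis using assms(2) by simp
qed

lemma Q_coeffs:
  fixes Q D :: "rat fps"
  assumes "fps_deriv Q = Q * D" "Q$0 = 1" "\<And>m. m + 1 < n \<Longrightarrow> D$m = 0" "n > 0"
  shows "\<And>k. 0 < k \<Longrightarrow> k < n \<Longrightarrow> Q$k = 0" and "Q$n = D$(n-1) / of_nat n"
proof -
  show low: "\<And>k. 0 < k \<Longrightarrow> k < n \<Longrightarrow> Q$k = 0"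
  proof -
    fix k show "0 < k \<Longrightarrow> k < n \<Longrightarrow> Q$k = 0"
    proof (induction k rule: less_induct)
      case (less k)
      have "of_nat k * Q$k = D$(k-1)" by (rule Q_step[OF assms(1,2)]) (use less in auto)
      moreover have "D$(k-1) = 0" using assms(3) less by auto
      ultimately show ?case using less by simp
    qed
  qed
  have "of_nat n * Q$n = D$(n-1)" by (rule Q_step[OF assms(1,2,4)]) (use low in auto)
  then show "Q$n = D$(n-1) / of_nat n" using assms(4) by (simp add: field_simps)
qed

lemma trm: "fps_const (of_nat (nat x)) * y - fps_const (of_nat (nat (-x))) * y = fps_const (of_int x) * (y::rat fps)"
proof (cases "x \<ge> 0")
  case True
  then have "nat (-x) = 0" "of_nat (nat x) = (of_int x :: rat)" by simp_all
  then show ?thesis by simp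
next
  case False
  then have "nat x = 0" "of_nat (nat (-x)) = - (of_int x :: rat)" by simp_all
  then show ?thesis by (simp add: fps_const_neg[symmetric] del: fps_const_neg)
qed

lemma main_fps:
  fixes F :: "'a set" and a :: "'a \<Rightarrow> rat" and e :: "'a \<Rightarrow> int" and n :: nat
  assumes fin: "finite F" and n: "n > 0"
    and mom: "\<And>m. 0 < m \<Longrightarrow> m < n \<Longrightarrow> (\<Sum>t\<in>F. of_int (e t) * a t ^ m) = 0"
  shows "\<And>k. k < n \<Longrightarrow> coeff ((\<Prod>t\<in>F. [:1, a t:] ^ nat (e t)) - (\<Prod>t\<in>F. [:1, a t:] ^ nat (- e t))) k = 0"
    and "coeff ((\<Prod>t\<in>F. [:1, a t:] ^ nat (e t)) - (\<Prod>t\<in>F. [:1, a t:] ^ nat (- e t))) n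
          = (-1)^(n-1) * (\<Sum>t\<in>F. of_int (e t) * a t ^ n) / of_nat n"
proof -
  define L where "L t = 1 + fps_const (a t) * fps_X" for t
  have L0: "L t $ 0 = 1" for t unfolding L_def by simp
  define Af where "Af = (\<Prod>t\<in>F. L t ^ nat (e t))"
  define Bf where "Bf = (\<Prod>t\<in>F. L t ^ nat (- e t))"
  have Af: "fps_of_poly (\<Prod>t\<in>F. [:1, a t:] ^ nat (e t)) = Af"
    unfolding Af_def L_def by (simp add: fps_of_poly_prod fps_of_poly_power fps_of_poly_linear')
  have Bf: "fps_of_poly (\<Prod>t\<in>F. [:1, a t:] ^ nat (- e t)) = Bf"
    unfolding Bf_def L_def by (simp add: fps_of_poly_prod fps_of_poly_power fps_of_poly_linear')
  have LA: "LD Af = (\<Sum>t\<in>F. fps_const (of_nat (nat (e t))) * LD (L t))" and A0: "Af $ 0 \<noteq> 0"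
    using LD_prod[OF fin, of "\<lambda>t. L t ^ nat (e t)"] unfolding Af_def
    by (auto simp: L0 fps_power_zeroth LD_power)
  have LB: "LD Bf = (\<Sum>t\<in>F. fps_const (of_nat (nat (- e t))) * LD (L t))" and B0: "Bf $ 0 \<noteq> 0"
    using LD_prod[OF fin, of "\<lambda>t. L t ^ nat (- e t)"] unfolding Bf_def
    by (auto simp: L0 fps_power_zeroth LD_power)
  have A1: "Af$0 = 1" "Bf$0 = 1" by (simp_all add: Af_def Bf_def prod_nth0 fps_power_zeroth L0)
  define Q where "Q = Af * inverse Bf"
  have Q0: "Q$0 = 1" using A1 by (simp add: Q_def)
  define D where "D = LD Q"
  have D: "D = (\<Sum>t\<in>F. fps_const (of_int (e t)) * LD (L t))"
  proof -
    have "D = LD Af - LD Bf" unfolding D_def Q_def using A1 by (simp add: LD_mult LD_inverse)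
    also have "\<dots> = (\<Sum>t\<in>F. fps_const (of_nat (nat (e t))) * LD (L t) - fps_const (of_nat (nat (- e t))) * LD (L t))"
      unfolding LA LB by (simp add: sum_subtractf)
    finally show ?thesis by (simp add: trm)
  qed
  have Dn: "D $ m = (-1)^m * (\<Sum>t\<in>F. of_int (e t) * a t ^ (m+1))" for m
  proof -
    have neg: "(- x)^m = (-1)^m * x^m" for x :: rat by (metis mult_minus1 power_mult_distrib)
    have tt: "of_int (e t) * (a t * (- a t)^m) = (-1)^m * (of_int (e t) * a t ^ (m+1))" for t
      by (simp only: neg[of "a t"] power_add power_one_right mult_ac)
    have "D $ m = (\<Sum>t\<in>F. of_int (e t) * (a t * (- a t)^m))"
      by (simp only: D fps_sum_nth fps_mult_left_const_nth L_def LD_lin)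
    also have "\<dots> = (-1)^m * (\<Sum>t\<in>F. of_int (e t) * a t ^ (m+1))"
      by (simp only: tt sum_distrib_left)
    finally show ?thesis .
  qed
  have deriv: "fps_deriv Q = Q * D"
  proof -
    have "Q * inverse Q = 1" using Q0 by (auto intro: inverse_mult_eq_1')
    moreover have "Q * (fps_deriv Q * inverse Q) = fps_deriv Q * (Q * inverse Q)" by (simp only: mult_ac)
    ultimately show ?thesis unfolding D_def LD_def by simp
  qed
  have Dz: "D$m = 0" if "m + 1 < n" for m
  proof -
    have "(\<Sum>t\<in>F. of_int (e t) * a t ^ (m+1)) = 0" using that by (intro mom) auto
    then show ?thesis by (simp only: Dn mult_zero_right)
  qed
  note QC = Q_coeffs[OF deriv Q0 Dz n]
  have AQB: "Af = Q * Bf"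
  proof -
    have "inverse Bf * Bf = 1" using A1 by (auto intro: inverse_mult_eq_1)
    moreover have "Af * inverse Bf * Bf = Af * (inverse Bf * Bf)" by (simp only: mult.assoc)
    ultimately show ?thesis unfolding Q_def by simp
  qed
  have co: "coeff ((\<Prod>t\<in>F. [:1, a t:] ^ nat (e t)) - (\<Prod>t\<in>F. [:1, a t:] ^ nat (- e t))) k
      = (\<Sum>i=0..k. (Q - 1)$i * Bf$(k-i))" for k
  proof -
    have "coeff ((\<Prod>t\<in>F. [:1, a t:] ^ nat (e t)) - (\<Prod>t\<in>F. [:1, a t:] ^ nat (- e t))) k
       = fps_of_poly ((\<Prod>t\<in>F. [:1, a t:] ^ nat (e t)) - (\<Prod>t\<in>F. [:1, a t:] ^ nat (- e t))) $ k"
      by (simp only: fps_of_poly_nth)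
    also have "\<dots> = (Af - Bf) $ k" by (simp only: fps_of_poly_diff Af Bf)
    also have "\<dots> = ((Q - 1) * Bf) $ k" by (simp add: AQB algebra_simps)
    also have "\<dots> = (\<Sum>i=0..k. (Q - 1)$i * Bf$(k-i))" by (rule fps_mult_nth)
    finally show ?thesis .
  qed
  have Qm1: "(Q - 1)$i = 0" if "i < n" for i
  proof (cases "i = 0")
    case True then show ?thesis using Q0 by simp
  next
    case False then show ?thesis using QC(1)[of i] that by simp
  qed
  show "\<And>k. k < n \<Longrightarrow> coeff ((\<Prod>t\<in>F. [:1, a t:] ^ nat (e t)) - (\<Prod>t\<in>F. [:1, a t:] ^ nat (- e t))) k = 0"
    unfolding co by (rule sum.neutral) (auto simp: Q0 QC(1))
  have "coeff ((\<Prod>t\<in>F. [:1, a t:] ^ nat (e t)) - (\<Prod>t\<in>F. [:1, a t:] ^ nat (- e t))) n = (Q - 1)$n * Bf$(n-n)"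
    unfolding co
  proof (rule sum_single)
    fix i assume "i \<in> {0..n}" "i \<noteq> n"
    then have "i < n" by auto
    then show "(Q - 1)$i * Bf$(n-i) = 0" by (simp only: Qm1 mult_zero_left)
  qed auto
  also have "\<dots> = Q$n" using A1(2) n by simp
  also have "\<dots> = D$(n-1) / of_nat n" by (rule QC(2))
  also have "\<dots> = (-1)^(n-1) * (\<Sum>t\<in>F. of_int (e t) * a t ^ n) / of_nat n"
  proof -
    have "n - 1 + 1 = n" using n by simp
    then show ?thesis by (simp only: Dn)
  qed
  finally show "coeff ((\<Prod>t\<in>F. [:1, a t:] ^ nat (e t)) - (\<Prod>t\<in>F. [:1, a t:] ^ nat (- e t))) n
          = (-1)^(n-1) * (\<Sum>t\<in>F. of_int (e t) * a t ^ n) / of_nat n" .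
qed


lemma powsum:
  fixes p :: nat assumes "prime p"
  shows "0 < e \<Longrightarrow> e < p - 1 \<Longrightarrow> p dvd (\<Sum>r<p. r^e)"
proof (induction e rule: less_induct)
  case (less e)
  define P where "P i = (\<Sum>r<p. r^i)" for i
  have shift: "(\<Sum>r<p. (r+1)^(e+1)) = P (e+1) + p^(e+1)"
  proof -
    have "(\<Sum>r<Suc p. r^(e+1)) = 0^(e+1) + (\<Sum>r<p. (Suc r)^(e+1))" by (rule sum.lessThan_Suc_shift)
    moreover have "(\<Sum>r<Suc p. r^(e+1)) = P (e+1) + p^(e+1)" by (simp add: P_def)
    ultimately show ?thesis by simp
  qed
  have binom: "(\<Sum>r<p. (r+1)^(e+1)) = (\<Sum>i\<le>e+1. (e+1 choose i) * P i)"
  proof -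
    have "(r+1)^(e+1) = (\<Sum>i\<le>e+1. (e+1 choose i) * r^i)" for r :: nat
      using binomial_ring[of r 1 "e+1"] by simp
    then have "(\<Sum>r<p. (r+1)^(e+1)) = (\<Sum>r<p. \<Sum>i\<le>e+1. (e+1 choose i) * r^i)" by simp
    also have "\<dots> = (\<Sum>i\<le>e+1. \<Sum>r<p. (e+1 choose i) * r^i)" by (rule sum.swap)
    also have "\<dots> = (\<Sum>i\<le>e+1. (e+1 choose i) * P i)" by (simp add: P_def sum_distrib_left)
    finally show ?thesis .
  qed
  have spl: "(\<Sum>i\<le>e+1. (e+1 choose i) * P i) = P (e+1) + ((\<Sum>i<e. (e+1 choose i) * P i) + (e+1) * P e)"
  proof -
    have "{..e} = insert e {..<e}" by auto
    then have "(\<Sum>i\<le>e. (e+1 choose i) * P i) = (e+1 choose e) * P e + (\<Sum>i<e. (e+1 choose i) * P i)"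
      by simp
    then show ?thesis by simp
  qed
  have eq: "p^(e+1) = (\<Sum>i<e. (e+1 choose i) * P i) + (e+1) * P e"
    using shift binom spl by simp
  have d1: "p dvd (\<Sum>i<e. (e+1 choose i) * P i)"
  proof (rule dvd_sum)
    fix i assume "i \<in> {..<e}"
    then have "i < e" by simp
    show "p dvd (e+1 choose i) * P i"
    proof (cases "i = 0")
      case True then show ?thesis by (simp add: P_def)
    next
      case False then show ?thesis using less.IH[of i] \<open>i < e\<close> less.prems by (simp add: P_def)
    qed
  qed
  have "p dvd p^(e+1)" by simp
  then have "p dvd (e+1) * P e" using eq d1 by (metis dvd_add_right_iff)
  moreover have "\<not> p dvd (e+1)" using less.prems by (auto dest: dvd_imp_le)
  ultimately have "p dvd P e" using assms prime_dvd_mult_iff by blast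
  then show ?case by (simp add: P_def)
qed

lemma split_half_sum:
  fixes p :: nat
  assumes "odd p"
  shows "(\<Sum>r\<in>{1..p-1}. f r) = (\<Sum>r\<in>{1..(p-1) div 2}. f r + f (p - r))"
proof -
  define h where "h = (p - 1) div 2"
  have p: "p = 2*h + 1" using assms unfolding h_def by presburger
  have un: "{1..p-1} = {1..h} \<union> {h+1..p-1}" using p by auto
  have img: "(\<lambda>r. p - r) ` {1..h} = {h+1..p-1}"
  proof
    show "(\<lambda>r. p - r) ` {1..h} \<subseteq> {h+1..p-1}" using p by auto
    show "{h+1..p-1} \<subseteq> (\<lambda>r. p - r) ` {1..h}"
    proof
      fix x assume "x \<in> {h+1..p-1}"
      then have "x = p - (p - x)" "p - x \<in> {1..h}" using p by auto
      then show "x \<in> (\<lambda>r. p - r) ` {1..h}" by blast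
    qed
  qed
  have inj: "inj_on (\<lambda>r. p - r) {1..h}" using p by (auto simp: inj_on_def)
  have "(\<Sum>r\<in>{1..p-1}. f r) = (\<Sum>r\<in>{1..h}. f r) + (\<Sum>r\<in>{h+1..p-1}. f r)"
    unfolding un by (rule sum.union_disjoint) auto
  also have "(\<Sum>r\<in>{h+1..p-1}. f r) = (\<Sum>r\<in>{1..h}. f (p - r))"
    unfolding img[symmetric] by (simp only: sum.reindex[OF inj] comp_def)
  finally show ?thesis unfolding h_def by (simp add: sum.distrib)
qed

lemma split_half_prod:
  fixes p :: nat
  assumes "odd p"
  shows "(\<Prod>r\<in>{1..p-1}. f r) = (\<Prod>r\<in>{1..(p-1) div 2}. f r * f (p - r))"
proof -
  define h where "h = (p - 1) div 2"
  have p: "p = 2*h + 1" using assms unfolding h_def by presburger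
  have un: "{1..p-1} = {1..h} \<union> {h+1..p-1}" using p by auto
  have img: "(\<lambda>r. p - r) ` {1..h} = {h+1..p-1}"
  proof
    show "(\<lambda>r. p - r) ` {1..h} \<subseteq> {h+1..p-1}" using p by auto
    show "{h+1..p-1} \<subseteq> (\<lambda>r. p - r) ` {1..h}"
    proof
      fix x assume "x \<in> {h+1..p-1}"
      then have "x = p - (p - x)" "p - x \<in> {1..h}" using p by auto
      then show "x \<in> (\<lambda>r. p - r) ` {1..h}" by blast
    qed
  qed
  have inj: "inj_on (\<lambda>r. p - r) {1..h}" using p by (auto simp: inj_on_def)
  have "(\<Prod>r\<in>{1..p-1}. f r) = (\<Prod>r\<in>{1..h}. f r) * (\<Prod>r\<in>{h+1..p-1}. f r)"
    unfolding un by (rule prod.union_disjoint) auto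
  also have "(\<Prod>r\<in>{h+1..p-1}. f r) = (\<Prod>r\<in>{1..h}. f (p - r))"
    unfolding img[symmetric] by (simp only: prod.reindex[OF inj] comp_def)
  finally show ?thesis unfolding h_def by (simp add: prod.distrib)
qed

lemma num_cong:
  fixes p r n :: nat
  assumes "prime p" "0 < r" "r < p" "2*n \<le> p - 1"
  shows "int p dvd (1 - (-1)^n * int r ^ (p-1-2*n) * (int r * int (p - r))^n)"
proof -
  have c1: "[int (p - r) = - int r] (mod int p)" using assms by (simp add: cong_iff_dvd_diff of_nat_diff)
  have "[(-1)^n * int r ^ (p-1-2*n) * (int r * int (p - r))^n = (-1)^n * int r ^ (p-1-2*n) * (int r * (- int r))^n] (mod int p)"
    by (intro cong_mult cong_pow cong_refl c1)
  moreover have "(-1)^n * int r ^ (p-1-2*n) * (int r * (- int r))^n = int r ^ (p - 1)"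
  proof -
    have "int r * (- int r) = (-1) * int r ^ 2" by (simp add: power2_eq_square)
    then have "(int r * (- int r))^n = (-1)^n * int r ^ (2*n)"
      by (simp only: power_mult_distrib power_mult)
    then have "(-1)^n * int r ^ (p-1-2*n) * (int r * (- int r))^n = ((-1)^n * (-1)^n) * (int r ^ (p-1-2*n) * int r ^ (2*n))"
      by (simp add: mult_ac)
    also have "\<dots> = int r ^ (p - 1)"
    proof -
      have e: "p - Suc (2*n) + 2*n = p - Suc 0" using assms(4) by simp
      show ?thesis by (simp add: power_add[symmetric] power_mult_distrib[symmetric] e)
    qed
    finally show ?thesis .
  qed
  moreover have "[int r ^ (p - 1) = 1] (mod int p)"
  proof -
    have "\<not> p dvd r" using assms by (auto dest: dvd_imp_le)
    then have "[r ^ (p - 1) = 1] (mod p)" using fermat_theorem[OF assms(1)] by blast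
    then show ?thesis by (metis cong_int_iff of_nat_1 of_nat_power)
  qed
  ultimately have "[(-1)^n * int r ^ (p-1-2*n) * (int r * int (p - r))^n = 1] (mod int p)"
    by (metis cong_trans)
  then show ?thesis by (metis cong_iff_dvd_diff cong_sym)
qed


lemma int_ndvd: "prime p \<Longrightarrow> 0 < r \<Longrightarrow> r < p \<Longrightarrow> \<not> int p dvd int r"
  by (auto dest: dvd_imp_le)

lemma K_div:
  fixes p n :: nat
  assumes pr: "prime p" and pn: "2*n + 1 < p" and n: "0 < n"
  shows "padic_cong p 1 (\<Sum>r\<in>{1..(p-1) div 2}. inverse (of_nat (r*(p-r)) :: rat) ^ n) 0"
proof -
  have "p > 2" using pn n by simp
  then have odd: "odd p" using prime_odd_nat[OF pr] by simp
  define g where "g r = inverse (of_nat (r*(p-r)) :: rat) ^ n" for r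
  define e where "e = p - 1 - 2*n"
  have gsym: "g (p - r) = g r" if "r \<le> p" for r
    using that unfolding g_def by (simp add: mult.commute)
  have full: "(\<Sum>r\<in>{1..p-1}. g r) = 2 * (\<Sum>r\<in>{1..(p-1) div 2}. g r)"
  proof -
    have "(\<Sum>r\<in>{1..p-1}. g r) = (\<Sum>r\<in>{1..(p-1) div 2}. g r + g (p - r))"
      by (rule split_half_sum[OF odd])
    also have "\<dots> = (\<Sum>r\<in>{1..(p-1) div 2}. 2 * g r)"
      by (rule sum.cong) (auto simp: gsym)
    finally show ?thesis by (simp add: sum_distrib_left)
  qed
  define X where "X r = (of_int ((-1)^n * int r ^ e) :: rat)" for r
  have trm: "padic_cong p 1 (g r - X r) 0" if r: "r \<in> {1..p-1}" for r
  proof -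
    define D where "D = (int r * int (p - r))^n"
    have rp: "0 < r" "r < p" using r pn by auto
    have nd: "\<not> int p dvd D" unfolding D_def
    proof -
      have pri: "prime (int p)" using pr by simp
      have "\<not> int p dvd int r" "\<not> int p dvd int (p - r)" using int_ndvd[OF pr rp] int_ndvd[OF pr, of "p - r"] rp by auto
      then have "\<not> int p dvd (int r * int (p - r))" using pri prime_dvd_mult_iff by blast
      then show "\<not> int p dvd (int r * int (p - r))^n" using pri prime_dvd_power by blast
    qed
    have D0: "D \<noteq> 0" using nd by auto
    have "g r = 1 / of_int D" unfolding g_def D_def using rp
      by (simp add: power_inverse inverse_eq_divide of_nat_diff power_one_over)
    then have "g r - X r = of_int (1 - (-1)^n * int r ^ e * D) / of_int D"
      using D0 unfolding X_def by (simp add: field_simps)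
    moreover have "int p dvd (1 - (-1)^n * int r ^ e * D)"
      unfolding D_def e_def by (rule num_cong[OF pr rp]) (use pn in simp)
    ultimately show ?thesis using pc1_int[OF _ nd] by metis
  qed
  have ip: "padic_cong p 1 (\<Sum>r\<in>{1..p-1}. X r) 0"
  proof -
    have "{..<p} = insert 0 {1..p-1}" using pn by auto
    moreover have "e > 0" "e < p - 1" using pn n unfolding e_def by auto
    ultimately have "p dvd (\<Sum>r\<in>{1..p-1}. r ^ e)" using powsum[OF pr, of e] by (simp add: zero_power)
    then have "int p dvd int (\<Sum>r\<in>{1..p-1}. r ^ e)" by (simp only: int_dvd_int_iff)
    then have dv: "int p dvd (-1)^n * int (\<Sum>r\<in>{1..p-1}. r ^ e)" by (rule dvd_mult)
    have eq: "(\<Sum>r\<in>{1..p-1}. X r) = of_int ((-1)^n * int (\<Sum>r\<in>{1..p-1}. r ^ e)) / of_int 1"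
      unfolding X_def by (simp add: sum_distrib_left)
    have "\<not> int p dvd 1" using pr by (metis int_dvd_int_iff nat_dvd_1_iff_1 not_prime_1 of_nat_1)
    from pc1_int[OF dv this] eq show ?thesis by metis
  qed
  have "padic_cong p 1 ((\<Sum>r\<in>{1..p-1}. g r - X r) + (\<Sum>r\<in>{1..p-1}. X r)) 0"
    by (intro pc_add[OF pr] pc_sum[OF pr] trm ip)
  then have "padic_cong p 1 (\<Sum>r\<in>{1..p-1}. g r) 0" by (simp add: sum_subtractf)
  then have "padic_cong p 1 ((\<Sum>r\<in>{1..p-1}. g r) * (of_int 1 / of_int 2)) 0"
    by (rule pc_mult_zp[OF pr]) (rule zp_frac, use pn n in \<open>auto dest: zdvd_imp_le\<close>)
  moreover have "(\<Sum>r\<in>{1..p-1}. g r) * (of_int 1 / of_int 2) = (\<Sum>r\<in>{1..(p-1) div 2}. g r)"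
    by (subst full) simp
  ultimately show ?thesis unfolding g_def by simp
qed


fun Dp :: "nat \<Rightarrow> rat poly" where
  "Dp 0 = 1"
| "Dp (Suc 0) = [:1, 3:]"
| "Dp (Suc (Suc l)) = Dp (Suc l) + smult 2 (pCons 0 (Dp (Suc l))) - pCons 0 (pCons 0 (Dp l))"

lemma key_id0:
  fixes X Y A B :: rat
  assumes "X - Y = 1"
  shows "(1 + 2*(X*Y)) * (A*X^2 - B*Y^2) - (X*Y)^2 * (A - B) = A*X^2*X^2 - B*Y^2*Y^2"
proof -
  have h: "1 + 2*(X*Y) = X^2 + Y^2"
  proof -
    have "X = Y + 1" using assms by simp
    then show ?thesis by (simp add: power2_eq_square algebra_simps)
  qed
  have "(1 + 2*(X*Y)) * (A*X^2 - B*Y^2) - (X*Y)^2 * (A - B) = (X^2 + Y^2) * (A*X^2 - B*Y^2) - (X*Y)^2 * (A - B)"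
    by (simp only: h)
  also have "\<dots> = A*X^2*X^2 - B*Y^2*Y^2" by (simp add: power2_eq_square algebra_simps)
  finally show ?thesis .
qed

lemma key_id:
  fixes X Y :: rat
  assumes "X - Y = 1"
  shows "(1 + 2*(X*Y)) * (X^(q+2) - Y^(q+2)) - (X*Y)^2 * (X^q - Y^q) = X^(q+4) - Y^(q+4)"
proof -
  have e: "X^(q+2) = X^q * X^2" "Y^(q+2) = Y^q * Y^2" "X^(q+4) = X^q * X^2 * X^2" "Y^(q+4) = Y^q * Y^2 * Y^2"
    by (simp_all add: numeral_eq_Suc mult_ac)
  show ?thesis unfolding e by (rule key_id0[OF assms])
qed

lemma Dp_eval: "poly (Dp l) (x*(x+1)) = (x+1)^(2*l+1) - (x::rat)^(2*l+1)"
proof (induction l rule: Dp.induct)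
  case 1 then show ?case by simp
next
  case 2 then show ?case by (simp add: algebra_simps power3_eq_cube power2_eq_square)
next
  case (3 l)
  define s where "s = x*(x+1)"
  define d1 where "d1 = poly (Dp (Suc l)) s"
  define d0 where "d0 = poly (Dp l) s"
  have step: "poly (Dp (Suc (Suc l))) s = (1 + 2*((x+1)*x)) * d1 - ((x+1)*x)^2 * d0"
    unfolding d1_def d0_def by (simp add: s_def power2_eq_square algebra_simps)
  have e1: "d1 = (x+1)^(2*l+1+2) - x^(2*l+1+2)"
  proof -
    have "2*Suc l + 1 = 2*l+1+2" by simp
    then show ?thesis using 3 unfolding d1_def s_def by metis
  qed
  have e0: "d0 = (x+1)^(2*l+1) - x^(2*l+1)" using 3 unfolding d0_def s_def by metis
  have "poly (Dp (Suc (Suc l))) s = (x+1)^(2*l+1+4) - x^(2*l+1+4)"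
    unfolding step e1 e0 by (rule key_id) simp
  moreover have "2*l+1+4 = 2 * Suc (Suc l) + 1" by simp
  ultimately show ?case unfolding s_def by metis
qed

lemma Dp_deg: "degree (Dp l) \<le> l \<and> coeff (Dp l) l = of_nat (2*l+1)"
proof (induction l rule: Dp.induct)
  case 1 then show ?case by simp
next
  case 2 then show ?case by simp
next
  case (3 l)
  have IHl: "degree (Dp l) \<le> l" "degree (Dp (Suc l)) \<le> Suc l" using 3 by blast+
  have d: "degree (Dp (Suc (Suc l))) \<le> Suc (Suc l)"
  proof -
    have a: "degree (Dp (Suc l)) \<le> Suc (Suc l)" using 3(1) by simp
    have b: "degree (smult 2 (pCons 0 (Dp (Suc l)))) \<le> Suc (Suc l)"
      using IHl degree_pCons_le[of 0 "Dp (Suc l)"] degree_smult_le[of 2 "pCons 0 (Dp (Suc l))"] by linarith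
    have c: "degree (pCons 0 (pCons 0 (Dp l))) \<le> Suc (Suc l)"
      using IHl degree_pCons_le[of 0 "Dp l"] degree_pCons_le[of 0 "pCons 0 (Dp l)"] by linarith
    show ?thesis by (simp only: Dp.simps) (intro degree_diff_le degree_add_le a b c)
  qed
  have "coeff (Dp (Suc l)) (Suc (Suc l)) = 0" using 3(1) by (intro coeff_eq_0) auto
  then have "coeff (Dp (Suc (Suc l))) (Suc (Suc l)) = 2 * of_nat (2 * Suc l + 1) - of_nat (2*l+1)"
    using 3 by simp
  also have "\<dots> = of_nat (2 * Suc (Suc l) + 1)" by simp
  finally show ?case using d by simp
qed

lemma deg_drop: assumes "degree (p::rat poly) \<le> Suc m" "coeff p (Suc m) = 0" shows "degree p \<le> m"
proof (rule ccontr)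
  assume "\<not> degree p \<le> m"
  then have d: "degree p = Suc m" using assms(1) by simp
  then have "lead_coeff p = 0" using assms(2) by simp
  then have "p = 0" by simp
  then show False using d by simp
qed

lemma Dp_span: "degree (q::rat poly) \<le> m \<Longrightarrow> \<exists>\<alpha>. \<forall>s. poly q s = (\<Sum>l\<le>m. \<alpha> l * poly (Dp l) s)"
proof (induction m arbitrary: q)
  case 0
  then have "poly q s = coeff q 0" for s by (simp add: poly_altdef)
  then show ?case by (intro exI[of _ "\<lambda>_. coeff q 0"]) simp
next
  case (Suc m)
  define c where "c = coeff q (Suc m) / of_nat (2 * Suc m + 1)"
  define q' where "q' = q - smult c (Dp (Suc m))"
  have "degree q' \<le> Suc m" unfolding q'_def using Suc.prems Dp_deg[of "Suc m"]
    by (intro degree_diff_le) (auto intro: order.trans[OF degree_smult_le])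
  moreover have "coeff q' (Suc m) = 0" unfolding q'_def c_def using Dp_deg[of "Suc m"]
    by (simp del: of_nat_Suc)
  ultimately have "degree q' \<le> m" by (rule deg_drop)
  then obtain \<alpha> where al: "\<And>s. poly q' s = (\<Sum>l\<le>m. \<alpha> l * poly (Dp l) s)" using Suc.IH by blast
  define \<beta> where "\<beta> l = (if l = Suc m then c else \<alpha> l)" for l
  have "poly q s = (\<Sum>l\<le>Suc m. \<beta> l * poly (Dp l) s)" for s
  proof -
    have "poly q s = poly q' s + c * poly (Dp (Suc m)) s" unfolding q'_def by simp
    also have "\<dots> = (\<Sum>l\<le>m. \<beta> l * poly (Dp l) s) + \<beta> (Suc m) * poly (Dp (Suc m)) s"
      unfolding al \<beta>_def by simp
    finally show ?thesis by simp
  qed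
  then show ?case by blast
qed

lemma T_odd: "\<exists>\<alpha>::nat\<Rightarrow>rat. \<forall>b::nat. (\<Sum>j<b. (of_nat (j*(j+1)) :: rat)^m) = (\<Sum>l\<le>m. \<alpha> l * of_nat b ^ (2*l+1))"
proof -
  obtain \<alpha> where al: "\<And>s. poly (monom 1 m) s = (\<Sum>l\<le>m. \<alpha> l * poly (Dp l) s)"
    using Dp_span[of "monom (1::rat) m" m] by (auto simp: degree_monom_eq)
  have pt: "(of_nat (j*(j+1)) :: rat)^m = (\<Sum>l\<le>m. \<alpha> l * ((of_nat j + 1)^(2*l+1) - (of_nat j)^(2*l+1)))" for j
  proof -
    have "(of_nat (j*(j+1)) :: rat) = of_nat j * (of_nat j + 1)" by (simp add: algebra_simps)
    then have "(of_nat (j*(j+1)) :: rat)^m = poly (monom 1 m) (of_nat j * (of_nat j + 1))" by (simp only: poly_monom)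
    also have "\<dots> = (\<Sum>l\<le>m. \<alpha> l * ((of_nat j + 1)^(2*l+1) - (of_nat j)^(2*l+1)))"
      unfolding al Dp_eval ..
    finally show ?thesis .
  qed
  have tel: "(\<Sum>j<b. (of_nat j + 1)^(2*l+1) - (of_nat j :: rat)^(2*l+1)) = of_nat b ^ (2*l+1)" for b l
  proof -
    have "(\<Sum>j<b. (of_nat (Suc j) :: rat)^(2*l+1) - (of_nat j :: rat)^(2*l+1)) = of_nat b ^ (2*l+1) - of_nat 0 ^ (2*l+1)"
      by (rule sum_lessThan_telescope)
    moreover have "(of_nat (Suc j) :: rat) = of_nat j + 1" for j by simp
    ultimately show ?thesis by (simp only:) simp
  qed
  have "(\<Sum>j<b. (of_nat (j*(j+1)) :: rat)^m) = (\<Sum>l\<le>m. \<alpha> l * of_nat b ^ (2*l+1))" for b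
  proof -
    have "(\<Sum>j<b. (of_nat (j*(j+1)) :: rat)^m) = (\<Sum>j<b. \<Sum>l\<le>m. \<alpha> l * ((of_nat j + 1)^(2*l+1) - (of_nat j)^(2*l+1)))"
      by (simp only: pt)
    also have "\<dots> = (\<Sum>l\<le>m. \<Sum>j<b. \<alpha> l * ((of_nat j + 1)^(2*l+1) - (of_nat j)^(2*l+1)))"
      by (rule sum.swap)
    also have "\<dots> = (\<Sum>l\<le>m. \<alpha> l * (\<Sum>j<b. (of_nat j + 1)^(2*l+1) - (of_nat j)^(2*l+1)))"
      by (simp only: sum_distrib_left)
    also have "\<dots> = (\<Sum>l\<le>m. \<alpha> l * of_nat b ^ (2*l+1))"
      by (simp only: tel)
    finally show ?thesis .
  qed
  then show ?thesis by blast
qed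


lemma fact_add_prod: "fact (m + n) = (fact m :: nat) * (\<Prod>i\<in>{1..n}. m + i)"
proof (induction n)
  case 0 then show ?case by simp
next
  case (Suc n)
  have "fact (m + Suc n) = (m + Suc n) * (fact (m + n) :: nat)" by simp
  then show ?case using Suc by (simp add: mult_ac)
qed

lemma pair_id: "r \<le> p \<Longrightarrow> (b*p + r) * (b*p + (p - r)) = r*(p-r) + p^2*(b*(b+1::nat))"
proof -
  assume "r \<le> p"
  then obtain q where q: "p = r + q" using le_Suc_ex by blast
  then have "p - r = q" by simp
  then show ?thesis unfolding q by (simp add: algebra_simps power2_eq_square)
qed

lemma fact_bp:
  fixes p b :: nat
  assumes "odd p" "p > 0"
  shows "fact (b*p) = fact b * p^b * (\<Prod>j<b. \<Prod>r\<in>{1..(p-1) div 2}. (r*(p-r) + p^2*(j*(j+1))))"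
proof (induction b)
  case 0 then show ?case by simp
next
  case (Suc b)
  have s1: "(\<Prod>i\<in>{1..p}. b*p + i) = (b*p + p) * (\<Prod>i\<in>{1..p-1}. b*p + i)"
  proof -
    have "{1..p} = insert p {1..p-1}" using assms by auto
    moreover have "p \<notin> {1..p-1}" using assms by auto
    ultimately show ?thesis by simp
  qed
  have s2: "(\<Prod>i\<in>{1..p-1}. b*p + i) = (\<Prod>r\<in>{1..(p-1) div 2}. r*(p-r) + p^2*(b*(b+1)))"
  proof -
    have "(\<Prod>i\<in>{1..p-1}. b*p + i) = (\<Prod>r\<in>{1..(p-1) div 2}. (b*p + r) * (b*p + (p - r)))"
      by (rule split_half_prod[OF assms(1)])
    also have "\<dots> = (\<Prod>r\<in>{1..(p-1) div 2}. r*(p-r) + p^2*(b*(b+1)))"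
      by (rule prod.cong[OF refl], rule pair_id) auto
    finally show ?thesis .
  qed
  have "fact (Suc b * p) = fact (b*p + p)" by (simp add: algebra_simps)
  also have "\<dots> = fact (b*p) * (\<Prod>i\<in>{1..p}. b*p + i)" by (rule fact_add_prod)
  also have "\<dots> = fact (b*p) * ((Suc b * p) * (\<Prod>r\<in>{1..(p-1) div 2}. r*(p-r) + p^2*(b*(b+1))))"
    by (simp only: s1 s2) (simp add: algebra_simps)
  also have "\<dots> = fact (Suc b) * p^Suc b * (\<Prod>j<Suc b. \<Prod>r\<in>{1..(p-1) div 2}. (r*(p-r) + p^2*(j*(j+1))))"
    unfolding Suc by (simp add: algebra_simps)
  finally show ?case .
qed

lemma powi_prod: "(\<Prod>i\<in>A. f i) powi c = (\<Prod>i\<in>A. (f i :: rat) powi c)"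
  by (induction A rule: infinite_finite_induct) (auto simp: power_int_mult_distrib)

lemma powi_split: "(y::rat) \<noteq> 0 \<Longrightarrow> y powi e = y ^ nat e * inverse (y ^ nat (-e))"
  by (cases "e \<ge> 0") (auto simp: power_int_def power_inverse)

definition zpoly :: "nat \<Rightarrow> rat poly \<Rightarrow> bool" where "zpoly p q \<longleftrightarrow> (\<forall>i. zp p (coeff q i))"

lemma zpoly_mult: "prime p \<Longrightarrow> zpoly p q \<Longrightarrow> zpoly p r \<Longrightarrow> zpoly p (q * r)"
  unfolding zpoly_def coeff_mult by (auto intro!: zp_sum zp_mult)

lemma zpoly_one: "prime p \<Longrightarrow> zpoly p 1"
  unfolding zpoly_def by (auto simp: coeff_1 intro: zp_int[of p 1, simplified] zp_int[of p 0, simplified])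

lemma zpoly_power: "prime p \<Longrightarrow> zpoly p q \<Longrightarrow> zpoly p (q ^ m)"
  by (induction m) (auto intro: zpoly_mult zpoly_one)

lemma zpoly_prod: "prime p \<Longrightarrow> (\<And>i. i \<in> A \<Longrightarrow> zpoly p (f i)) \<Longrightarrow> zpoly p (\<Prod>i\<in>A. f i)"
  by (induction A rule: infinite_finite_induct) (auto intro: zpoly_mult zpoly_one)

lemma zpoly_lin: "prime p \<Longrightarrow> zp p a \<Longrightarrow> zpoly p [:1, a:]"
  unfolding zpoly_def
  by (auto simp: coeff_pCons split: nat.split intro: zp_int[of p 1, simplified] zp_int[of p 0, simplified])

lemma zpoly_diff: "prime p \<Longrightarrow> zpoly p q \<Longrightarrow> zpoly p r \<Longrightarrow> zpoly p (q - r)"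
  unfolding zpoly_def by (auto intro: zp_diff)

lemma pu_one_plus: assumes "padic_cong p 1 x 0" shows "pu p (1 + x)"
proof -
  obtain a d where ad: "\<not> int p dvd d" "x = of_int (int p * a) / of_int d"
    using assms unfolding padic_cong_def by auto
  then have "d \<noteq> 0" by auto
  then have "1 + x = of_int (d + int p * a) / of_int d" using ad by (simp add: field_simps)
  moreover have "\<not> int p dvd (d + int p * a)" using ad(1) by (simp add: dvd_add_left_iff)
  ultimately show ?thesis unfolding pu_def using ad(1) by blast
qed


lemma sum_sigma3:
  fixes b :: "'a \<Rightarrow> nat"
  assumes "finite I" "finite A"
  shows "(\<Sum>t\<in>(SIGMA i:I. {..<b i} \<times> A). f t) = (\<Sum>i\<in>I. \<Sum>j<b i. \<Sum>r\<in>A. f (i,j,r))"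
proof -
  have "(\<Sum>i\<in>I. \<Sum>j<b i. \<Sum>r\<in>A. f (i,j,r)) = (\<Sum>i\<in>I. \<Sum>jr\<in>{..<b i} \<times> A. f (i,jr))"
    by (simp add: sum.cartesian_product split_def)
  also have "\<dots> = (\<Sum>t\<in>(SIGMA i:I. {..<b i} \<times> A). f t)"
    using assms by (subst sum.Sigma) (auto simp: split_def intro!: finite_cartesian_product)
  finally show ?thesis by simp
qed

lemma prod_sigma3:
  fixes b :: "'a \<Rightarrow> nat"
  assumes "finite I" "finite A"
  shows "(\<Prod>t\<in>(SIGMA i:I. {..<b i} \<times> A). f t) = (\<Prod>i\<in>I. \<Prod>j<b i. \<Prod>r\<in>A. f (i,j,r))"
proof -
  have "(\<Prod>i\<in>I. \<Prod>j<b i. \<Prod>r\<in>A. f (i,j,r)) = (\<Prod>i\<in>I. \<Prod>jr\<in>{..<b i} \<times> A. f (i,jr))"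
    by (simp add: prod.cartesian_product split_def)
  also have "\<dots> = (\<Prod>t\<in>(SIGMA i:I. {..<b i} \<times> A). f t)"
    using assms by (subst prod.Sigma) (auto simp: split_def intro!: finite_cartesian_product)
  finally show ?thesis by simp
qed

lemma prod_powi_sum: "(x::rat) \<noteq> 0 \<Longrightarrow> (\<Prod>i\<in>I. x powi f i) = x powi (\<Sum>i\<in>I. f i)"
  by (induction I rule: infinite_finite_induct) (auto simp: power_int_add)

lemma fact_rat:
  fixes p bb :: nat
  assumes pr: "prime p" and odd: "odd p"
  defines "A \<equiv> {1..(p-1) div 2}"
  shows "(fact (bb*p) :: rat) = fact bb * (of_nat p * (\<Prod>r\<in>A. of_nat (r*(p-r))))^bb *
           (\<Prod>j<bb. \<Prod>r\<in>A. 1 + of_nat (j*(j+1)) * inverse (of_nat (r*(p-r))) * of_nat p ^ 2)"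
proof -
  have p0: "p > 0" using pr prime_gt_0_nat by blast
  have nz: "(of_nat (r*(p-r)) :: rat) \<noteq> 0" if "r \<in> A" for r using that p0 unfolding A_def
    by (auto simp: A_def)
  have fac: "(of_nat (r*(p-r) + p^2*(j*(j+1))) :: rat) = of_nat (r*(p-r)) * (1 + of_nat (j*(j+1)) * inverse (of_nat (r*(p-r))) * of_nat p ^ 2)"
    if "r \<in> A" for r j
    using nz[OF that] by (simp add: field_simps)
  have "(fact (bb*p) :: rat) = of_nat (fact (bb*p))" by (rule of_nat_fact[symmetric])
  also have "\<dots> = fact bb * of_nat p ^ bb * (\<Prod>j<bb. \<Prod>r\<in>A. of_nat (r*(p-r) + p^2*(j*(j+1))))"
    unfolding fact_bp[OF odd p0] A_def by (simp only: of_nat_mult of_nat_prod of_nat_power of_nat_fact)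
  also have "(\<Prod>j<bb. \<Prod>r\<in>A. of_nat (r*(p-r) + p^2*(j*(j+1))) :: rat)
     = (\<Prod>j<bb. (\<Prod>r\<in>A. of_nat (r*(p-r))) * (\<Prod>r\<in>A. 1 + of_nat (j*(j+1)) * inverse (of_nat (r*(p-r))) * of_nat p ^ 2))"
  proof (rule prod.cong[OF refl])
    fix j
    have "(\<Prod>r\<in>A. of_nat (r*(p-r) + p^2*(j*(j+1))) :: rat) = (\<Prod>r\<in>A. of_nat (r*(p-r)) * (1 + of_nat (j*(j+1)) * inverse (of_nat (r*(p-r))) * of_nat p ^ 2))"
      by (rule prod.cong[OF refl]) (rule fac)
    also have "\<dots> = (\<Prod>r\<in>A. of_nat (r*(p-r))) * (\<Prod>r\<in>A. 1 + of_nat (j*(j+1)) * inverse (of_nat (r*(p-r))) * of_nat p ^ 2)"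
      by (rule prod.distrib)
    finally show "(\<Prod>r\<in>A. of_nat (r*(p-r) + p^2*(j*(j+1))) :: rat) = (\<Prod>r\<in>A. of_nat (r*(p-r))) * (\<Prod>r\<in>A. 1 + of_nat (j*(j+1)) * inverse (of_nat (r*(p-r))) * of_nat p ^ 2)" .
  qed
  also have "\<dots> = (\<Prod>r\<in>A. of_nat (r*(p-r)))^bb * (\<Prod>j<bb. \<Prod>r\<in>A. 1 + of_nat (j*(j+1)) * inverse (of_nat (r*(p-r))) * of_nat p ^ 2)"
    by (simp add: prod.distrib)
  finally show ?thesis by (simp add: power_mult_distrib mult_ac)
qed

theorem mainTheorem13:
  fixes k n :: nat and b :: "nat \<Rightarrow> nat" and c :: "nat \<Rightarrow> int"
  assumes "n > 0"
    and "\<forall>j<n. (\<Sum>i<k. c i * int (b i) ^ (2 * j + 1)) = 0"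
  shows "\<exists>P. \<forall>p. prime p \<and> p > P \<longrightarrow>
           padic_cong p (2 * n + 1)
             (\<Prod>i<k. (fact (b i * p) :: rat) powi c i)
             (\<Prod>i<k. (fact (b i) :: rat) powi c i)"
proof -
  have mom0: "(\<Sum>i<k. int (b i) * c i) = 0" using assms(2)[rule_format, of 0] assms(1) by (simp add: mult.commute)
  show ?thesis
  proof (intro exI[of _ "2*n + 2 + (\<Sum>i<k. b i)"] allI impI)
    fix p assume pP: "prime p \<and> p > 2*n + 2 + (\<Sum>i<k. b i)"
    then have pr: "prime p" and pn: "2*n+1 < p" by auto
    have pb: "b i < p" if "i < k" for i
    proof -
      have "b i \<le> (\<Sum>i<k. b i)" using that by (intro member_le_sum) auto
      then show ?thesis using pP by simp
    qed
    have p2: "p > 2" using pn assms(1) by simp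
    have odd: "odd p" using prime_odd_nat[OF pr p2] .
    define A where "A = {1..(p-1) div 2}"
    have finA: "finite A" unfolding A_def by simp
    have rA: "0 < r \<and> r < p" if "r \<in> A" for r using that p2 unfolding A_def by auto
    define w where "w r = inverse (of_nat (r*(p-r)) :: rat)" for r
    define s where "s j = (of_nat (j*(j+1)) :: rat)" for j
    define F where "F = (SIGMA i:{..<k}. {..<b i} \<times> A)"
    have finF: "finite F" unfolding F_def using finA by (auto intro!: finite_cartesian_product)
    define a where "a t = s (fst (snd t)) * w (snd (snd t))" for t :: "nat \<times> nat \<times> nat"
    define e where "e t = c (fst t)" for t :: "nat \<times> nat \<times> nat"
    define y where "y t = 1 + a t * of_nat p ^ 2" for t
    define W where "W = (\<Prod>r\<in>A. of_nat (r*(p-r)) :: rat)"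
    define G where "G bb = (\<Prod>j<bb. \<Prod>r\<in>A. 1 + s j * w r * of_nat p ^ 2)" for bb
    define R where "R = (\<Prod>i<k. (fact (b i) :: rat) powi c i)"
    define Q where "Q = (\<Prod>i<k. G (b i) powi c i)"
    have W0: "W \<noteq> 0" unfolding W_def by (auto simp: finA dest: rA)
    have pW0: "of_nat p * W \<noteq> 0" using W0 p2 by simp
    have w_zp: "zp p (w r)" if "r \<in> A" for r
    proof -
      have "\<not> int p dvd int (r * (p - r))"
      proof
        assume "int p dvd int (r * (p - r))"
        then have "p dvd r * (p - r)" by (simp only: int_dvd_int_iff)
        then have "p dvd r \<or> p dvd (p - r)" using pr prime_dvd_mult_iff by blast
        then show False using rA[OF that] by (auto dest: dvd_imp_le)
      qed
      moreover have "w r = of_int 1 / of_int (int (r*(p-r)))" unfolding w_def by (simp add: inverse_eq_divide)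
      ultimately show ?thesis using zp_frac by metis
    qed
    have a_zp: "zp p (a t)" if "t \<in> F" for t
    proof -
      have "zp p (s j)" for j unfolding s_def by (rule zp_nat[OF pr])
      then show ?thesis using that unfolding a_def F_def by (auto intro!: zp_mult[OF pr] w_zp)
    qed
    have y_pu: "pu p (y t)" if "t \<in> F" for t
    proof -
      have "padic_cong p 2 (of_nat p ^ 2 * a t) 0" by (rule pc_ppow[OF a_zp[OF that]])
      then have "padic_cong p 1 (a t * of_nat p ^ 2) 0" by (intro pc_mono[of 1 2]) (auto simp: mult.commute)
      then show ?thesis unfolding y_def by (rule pu_one_plus)
    qed
    have LHS: "(\<Prod>i<k. (fact (b i * p) :: rat) powi c i) = R * Q"
    proof -
      have "(\<Prod>i<k. (fact (b i * p) :: rat) powi c i) = (\<Prod>i<k. (fact (b i) * (of_nat p * W)^(b i) * G (b i)) powi c i)"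
        unfolding W_def G_def s_def w_def A_def using fact_rat[OF pr odd] by simp
      also have "\<dots> = R * (\<Prod>i<k. (of_nat p * W) powi (int (b i) * c i)) * Q"
        unfolding R_def Q_def by (simp add: power_int_mult_distrib prod.distrib power_int_power)
      also have "(\<Prod>i<k. (of_nat p * W) powi (int (b i) * c i)) = 1"
        by (subst prod_powi_sum[OF pW0]) (simp only: mom0 power_int_0_right)
      finally show ?thesis by simp
    qed
    have QF: "Q = (\<Prod>t\<in>F. y t powi e t)"
    proof -
      have "Q = (\<Prod>i<k. \<Prod>j<b i. \<Prod>r\<in>A. (1 + s j * w r * of_nat p ^ 2) powi c i)"
        unfolding Q_def G_def by (simp add: powi_prod)
      also have "\<dots> = (\<Prod>t\<in>F. y t powi e t)"
        unfolding F_def y_def a_def e_def by (subst prod_sigma3[OF _ finA]) (simp_all add: mult_ac)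
      finally show ?thesis .
    qed
    have momF: "(\<Sum>t\<in>F. of_int (e t) * a t ^ m) = (\<Sum>r\<in>A. w r ^ m) * (\<Sum>i<k. of_int (c i) * (\<Sum>j<b i. s j ^ m))" for m
    proof -
      have "(\<Sum>t\<in>F. of_int (e t) * a t ^ m) = (\<Sum>i<k. \<Sum>j<b i. \<Sum>r\<in>A. of_int (c i) * (s j ^ m * w r ^ m))"
        unfolding F_def e_def a_def by (subst sum_sigma3[OF _ finA]) (simp_all add: power_mult_distrib)
      also have "\<dots> = (\<Sum>i<k. \<Sum>j<b i. of_int (c i) * s j ^ m * (\<Sum>r\<in>A. w r ^ m))"
        by (simp add: sum_distrib_left mult.assoc)
      also have "\<dots> = (\<Sum>r\<in>A. w r ^ m) * (\<Sum>i<k. of_int (c i) * (\<Sum>j<b i. s j ^ m))"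
        by (simp add: sum_distrib_left sum_distrib_right mult_ac)
      finally show ?thesis .
    qed
    have Tz: "(\<Sum>i<k. of_int (c i) * (\<Sum>j<b i. s j ^ m)) = 0" if "m < n" for m
    proof -
      obtain \<alpha> where al: "\<And>bb. (\<Sum>j<bb. (of_nat (j*(j+1)) :: rat)^m) = (\<Sum>l\<le>m. \<alpha> l * of_nat bb ^ (2*l+1))"
        using T_odd[of m] by blast
      have "(\<Sum>i<k. of_int (c i) * (\<Sum>j<b i. s j ^ m)) = (\<Sum>i<k. of_int (c i) * (\<Sum>l\<le>m. \<alpha> l * of_nat (b i) ^ (2*l+1)))"
        unfolding s_def al ..
      also have "\<dots> = (\<Sum>l\<le>m. \<alpha> l * (\<Sum>i<k. of_int (c i) * of_nat (b i) ^ (2*l+1)))"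
        by (simp add: sum_distrib_left sum.swap[of _ "{..<k}"] mult_ac)
      also have "\<dots> = 0"
      proof (rule sum.neutral, rule ballI)
        fix l assume "l \<in> {..m}"
        then have "l < n" using that by simp
        then have "(\<Sum>i<k. c i * int (b i) ^ (2 * l + 1)) = 0" using assms(2) by blast
        then have "(of_int (\<Sum>i<k. c i * int (b i) ^ (2 * l + 1)) :: rat) = 0" by simp
        then have "(\<Sum>i<k. of_int (c i) * of_nat (b i) ^ (2*l+1) :: rat) = 0" by simp
        then show "\<alpha> l * (\<Sum>i<k. of_int (c i) * of_nat (b i) ^ (2*l+1)) = 0" by simp
      qed
      finally show ?thesis .
    qed
    have momz: "(\<Sum>t\<in>F. of_int (e t) * a t ^ m) = 0" if "0 < m" "m < n" for m
      using Tz[OF that(2)] by (simp add: momF)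
    define Ap where "Ap = (\<Prod>t\<in>F. [:1, a t:] ^ nat (e t))"
    define Bp where "Bp = (\<Prod>t\<in>F. [:1, a t:] ^ nat (- e t))"
    note MF = main_fps[where F=F and a=a and e=e and n=n, OF finF assms(1) momz]
    define x where "x = (of_nat p ^ 2 :: rat)"
    define Aev where "Aev = (\<Prod>t\<in>F. y t ^ nat (e t))"
    define Bev where "Bev = (\<Prod>t\<in>F. y t ^ nat (- e t))"
    have pA: "poly Ap x = Aev" unfolding Ap_def Aev_def y_def x_def by (simp add: poly_prod mult.commute)
    have pB: "poly Bp x = Bev" unfolding Bp_def Bev_def y_def x_def by (simp add: poly_prod mult.commute)
    have Bpu: "pu p Bev" unfolding Bev_def by (intro pu_prod[OF pr] pu_power[OF pr] y_pu)
    have B0: "Bev \<noteq> 0" using pu_nonzero[OF Bpu] .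
    have QAB: "Q = Aev * inverse Bev"
    proof -
      have "Q = (\<Prod>t\<in>F. y t ^ nat (e t) * inverse (y t ^ nat (- e t)))"
        unfolding QF by (rule prod.cong[OF refl]) (rule powi_split[OF pu_nonzero[OF y_pu]])
      also have "\<dots> = Aev * (\<Prod>t\<in>F. inverse (y t ^ nat (- e t)))"
        unfolding Aev_def by (rule prod.distrib)
      also have "(\<Prod>t\<in>F. inverse (y t ^ nat (- e t))) = inverse Bev"
        unfolding Bev_def using prod_inversef[of "\<lambda>t. y t ^ nat (- e t)" F] by (simp add: comp_def)
      finally show ?thesis .
    qed
    have zpAB: "zpoly p (Ap - Bp)" unfolding Ap_def Bp_def
      by (intro zpoly_diff[OF pr] zpoly_prod[OF pr] zpoly_power[OF pr] zpoly_lin[OF pr] a_zp)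
    have Kd: "padic_cong p 1 (\<Sum>r\<in>A. w r ^ n) 0"
      unfolding A_def w_def by (rule K_div[OF pr pn assms(1)])
    have Zzp: "zp p (\<Sum>i<k. of_int (c i) * (\<Sum>j<b i. s j ^ n))"
      unfolding s_def by (intro zp_sum[OF pr] zp_mult[OF pr] zp_int[OF pr] zp_power[OF pr] zp_nat[OF pr])
    have nzp: "zp p ((-1)^(n-1) / of_nat n)"
    proof -
      have "\<not> int p dvd int n" using pn assms(1) by (auto dest: dvd_imp_le)
      then have "zp p (of_int ((-1)^(n-1)) / of_int (int n))" by (rule zp_frac)
      then show ?thesis by simp
    qed
    have trmi: "padic_cong p (2*n+1) (coeff (Ap - Bp) i * x ^ i) 0" for i
    proof (cases "i < n")
      case True
      have "coeff (Ap - Bp) i = 0" unfolding Ap_def Bp_def using MF(1) True by blast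
      then show ?thesis using pc_zero[OF pr] by simp
    next
      case False
      show ?thesis
      proof (cases "i = n")
        case True
        have "coeff (Ap - Bp) n = (\<Sum>r\<in>A. w r ^ n) * ((\<Sum>i<k. of_int (c i) * (\<Sum>j<b i. s j ^ n)) * ((-1)^(n-1) / of_nat n))"
        proof -
          have m2: "coeff (Ap - Bp) n = (-1)^(n-1) * (\<Sum>t\<in>F. of_int (e t) * a t ^ n) / of_nat n"
            unfolding Ap_def Bp_def by (rule MF(2))
          show ?thesis unfolding m2 momF[of n] by (simp add: divide_inverse mult_ac)
        qed
        then have c1: "padic_cong p 1 (coeff (Ap - Bp) n) 0"
          using pc_mult_zp[OF pr Kd zp_mult[OF pr Zzp nzp]] by simp
        have c2: "padic_cong p (2*n) (of_nat p ^ (2*n) * 1) 0" by (rule pc_ppow) (rule zp_int[OF pr, of 1, simplified])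
        have "padic_cong p (1 + 2*n) (coeff (Ap - Bp) n * (of_nat p ^ (2*n) * 1)) 0" by (rule pc_mult[OF pr c1 c2])
        moreover have "coeff (Ap - Bp) i * x ^ i = coeff (Ap - Bp) n * (of_nat p ^ (2*n) * 1)"
          unfolding x_def True by (simp only: power_mult[symmetric] mult_1_right)
        moreover have "1 + 2*n = 2*n+1" by simp
        ultimately show ?thesis by metis
      next
        case False
        with \<open>\<not> i < n\<close> have "2*n+1 \<le> 2*i" by simp
        moreover have "padic_cong p (2*i) (of_nat p ^ (2*i) * coeff (Ap - Bp) i) 0"
          by (rule pc_ppow) (use zpAB in \<open>simp add: zpoly_def\<close>)
        moreover have "coeff (Ap - Bp) i * x ^ i = of_nat p ^ (2*i) * coeff (Ap - Bp) i"
          unfolding x_def by (simp only: power_mult[symmetric] mult.commute)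
        ultimately show ?thesis using pc_mono by metis
      qed
    qed
    have dAB: "padic_cong p (2*n+1) (Aev - Bev) 0"
    proof -
      have "Aev - Bev = poly (Ap - Bp) x" using pA pB by simp
      also have "\<dots> = (\<Sum>i\<le>degree (Ap - Bp). coeff (Ap - Bp) i * x ^ i)" by (rule poly_altdef)
      finally show ?thesis using pc_sum[OF pr, of "{..degree (Ap - Bp)}", OF trmi] by simp
    qed
    have Q1: "padic_cong p (2*n+1) (Q - 1) 0"
    proof -
      have "Q - 1 = (Aev - Bev) * inverse Bev" unfolding QAB using B0 by (simp add: field_simps)
      then show ?thesis using pc_mult_zp[OF pr dAB pu_zp[OF pu_inverse[OF Bpu]]] by simp
    qed
    have Rzp: "zp p R"
    proof -
      have "pu p (fact (b i) :: rat)" if "i < k" for i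
      proof -
        have "\<not> p dvd fact (b i)" using pb[OF that] prime_dvd_fact_iff[OF pr] by simp
        then have "pu p (of_nat (fact (b i)))" by (rule pu_nat[OF pr])
        then show ?thesis by (simp add: of_nat_fact)
      qed
      then show ?thesis unfolding R_def by (intro pu_zp pu_prod[OF pr] pu_powi[OF pr]) auto
    qed
    have "padic_cong p (2*n+1) ((Q - 1) * R) 0" by (rule pc_mult_zp[OF pr Q1 Rzp])
    moreover have "(\<Prod>i<k. (fact (b i * p) :: rat) powi c i) - (\<Prod>i<k. (fact (b i) :: rat) powi c i) = (Q - 1) * R"
      unfolding LHS R_def by (simp add: algebra_simps)
    ultimately show "padic_cong p (2 * n + 1) (\<Prod>i<k. (fact (b i * p) :: rat) powi c i) (\<Prod>i<k. (fact (b i) :: rat) powi c i)"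
      by (subst pc_iff) simp
  qed
qed


end
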